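(* Let $(X_1,Y_1),\dots,(X_{n+1},Y_{n+1})$ be data with risks $L_i=\mathcal{L}(f,X_i,Y_i)\in[0,1]$ (the value $L_{n+1}$ is not used), $s:\mathcal{X}\to[0,1]$ a score, $\alpha,\gamma\in(0,1)$, and $E_{\gamma,n+1}$ as defined below. If $\gamma\le\alpha$, then $$\mathbf{1}\{E_{\gamma,n+1}\ge 1/\alpha\}=\mathbf{1}\Big\{\frac{1+\sum_{i=1}^n L_i\mathbf{1}\{s(X_i)\le s(X_{n+1})\}}{n+1}\le\gamma\Big\}.$$ If $\gamma>\alpha$, then $E_{\gamma,n+1}\ge1/\alpha$ holds if and only if both $\frac{1+\sum_{i=1}^n L_i\mathbf{1}\{s(X_i)\le s(X_{n+1})\}}{n+1}\le\gamma$ and, for all $t\in\mathcal{M}$ and all $\ell\in[0,1]$, $\frac{\ell+\sum_{i=1}^n L_i\mathbf{1}\{s(X_i)\le t\}}{n+1}\notin(\alpha,\gamma]$.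
   Context: Let $\mathcal{M}=\{s(X_i)\}_{i=1}^{n+1}$. For $t\in\mathbb{R}$, $\ell\in[0,1]$, define $F(t;\ell)=\frac{1}{n+1}\big(\sum_{i=1}^n L_i\mathbf{1}\{s(X_i)\le t\}+\ell\,\mathbf{1}\{s(X_{n+1})\le t\}\big)$ and $t_\gamma(\ell)=\max\{t\in\mathcal{M}:F(t;\ell)\le\gamma\}$ with $\max\emptyset=-\infty$. Define $$E_{\gamma,n+1}=\inf_{\ell\in[0,1]}\frac{(n+1)\mathbf{1}\{s(X_{n+1})\le t_\gamma(\ell)\}}{\sum_{i=1}^n L_i\mathbf{1}\{s(X_i)\le t_\gamma(\ell)\}+\ell\,\mathbf{1}\{s(X_{n+1})\le t_\gamma(\ell)\}},$$ where each ratio is $0$ when its numerator is $0$ and $+\infty$ when its numerator is positive and its denominator is $0$; and $E_{\gamma,n+1}=0$ if $\inf_{\ell}t_\gamma(\ell)=-\infty$. *)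

theory Defs
  imports "HOL-Analysis.Analysis"
begin

(* Scores are passed as sc i = s (X i), indices 1..n+1. *)

definition scoreset :: "nat \<Rightarrow> (nat \<Rightarrow> real) \<Rightarrow> real set" where
  "scoreset n sc = sc ` {1..n+1}"

definition Fcal :: "nat \<Rightarrow> (nat \<Rightarrow> real) \<Rightarrow> (nat \<Rightarrow> real) \<Rightarrow> real \<Rightarrow> real \<Rightarrow> real" where
  "Fcal n L sc t l =
     ((\<Sum>i=1..n. L i * (if sc i \<le> t then 1 else 0)) + l * (if sc (n+1) \<le> t then 1 else 0))
     / (real n + 1)"

definition tgamma :: "nat \<Rightarrow> (nat \<Rightarrow> real) \<Rightarrow> (nat \<Rightarrow> real) \<Rightarrow> real \<Rightarrow> real \<Rightarrow> ereal" where
  "tgamma n L sc \<gamma> l =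
     (let A = {t \<in> scoreset n sc. Fcal n L sc t l \<le> \<gamma>}
      in if A = {} then -\<infinity> else ereal (Max A))"

definition eratio :: "nat \<Rightarrow> (nat \<Rightarrow> real) \<Rightarrow> (nat \<Rightarrow> real) \<Rightarrow> ereal \<Rightarrow> real \<Rightarrow> ereal" where
  "eratio n L sc t l =
     (let num = (real n + 1) * (if ereal (sc (n+1)) \<le> t then 1 else 0);
          den = (\<Sum>i=1..n. L i * (if ereal (sc i) \<le> t then 1 else 0))
                + l * (if ereal (sc (n+1)) \<le> t then 1 else 0)
      in if num = 0 then 0 else if den = 0 then \<infinity> else ereal (num / den))"

definition Egamma :: "nat \<Rightarrow> (nat \<Rightarrow> real) \<Rightarrow> (nat \<Rightarrow> real) \<Rightarrow> real \<Rightarrow> ereal" where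
  "Egamma n L sc \<gamma> =
     (if (INF l\<in>{0..1}. tgamma n L sc \<gamma> l) = -\<infinity> then 0
      else (INF l\<in>{0..1}. eratio n L sc (tgamma n L sc \<gamma> l) l))"

end

theory Submission imports Defs begin

lemma Fcal_mono:
  assumes L: "\<forall>i\<in>{1..n+1}. 0 \<le> L i" and l: "0 \<le> l" and tt: "t \<le> t'"
  shows "Fcal n L sc t l \<le> Fcal n L sc t' l"
proof -
  have "(\<Sum>i=1..n. L i * (if sc i \<le> t then 1 else 0)) \<le> (\<Sum>i=1..n. L i * (if sc i \<le> t' then 1 else 0))"
    by (rule sum_mono) (use L tt in auto)
  moreover have "l * (if sc (n+1) \<le> t then 1 else 0) \<le> l * (if sc (n+1) \<le> t' then 1 else 0)"
    using l tt by auto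
  ultimately show ?thesis unfolding Fcal_def by (intro divide_right_mono) auto
qed

lemma tg_max:
  assumes "{t \<in> scoreset n sc. Fcal n L sc t l \<le> \<gamma>} \<noteq> {}"
  shows "tgamma n L sc \<gamma> l = ereal (Max {t \<in> scoreset n sc. Fcal n L sc t l \<le> \<gamma>})"
  using assms unfolding tgamma_def Let_def by auto

lemma fin_A: "finite {t \<in> scoreset n sc. Fcal n L sc t l \<le> \<gamma>}"
  unfolding scoreset_def by auto

lemma s0_in: "sc (n+1) \<in> scoreset n sc" unfolding scoreset_def by auto

lemma s0le:
  assumes L: "\<forall>i\<in>{1..n+1}. 0 \<le> L i" and l: "0 \<le> l"
  shows "ereal (sc (n+1)) \<le> tgamma n L sc \<gamma> l \<longleftrightarrow> Fcal n L sc (sc (n+1)) l \<le> \<gamma>"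
proof
  assume h: "ereal (sc (n+1)) \<le> tgamma n L sc \<gamma> l"
  let ?A = "{t \<in> scoreset n sc. Fcal n L sc t l \<le> \<gamma>}"
  have ne: "?A \<noteq> {}" using h unfolding tgamma_def Let_def by (auto split: if_splits)
  have "Max ?A \<in> ?A" using ne fin_A by (rule Max_in[rotated])
  moreover have "sc (n+1) \<le> Max ?A" using h tg_max[OF ne] by simp
  ultimately show "Fcal n L sc (sc (n+1)) l \<le> \<gamma>"
    using Fcal_mono[OF L l, of "sc (n+1)" "Max ?A" sc] by auto
next
  assume h: "Fcal n L sc (sc (n+1)) l \<le> \<gamma>"
  let ?A = "{t \<in> scoreset n sc. Fcal n L sc t l \<le> \<gamma>}"
  have i: "sc (n+1) \<in> ?A" using h s0_in by auto
  hence ne: "?A \<noteq> {}" by auto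
  have "sc (n+1) \<le> Max ?A" using i fin_A by (rule Max_ge[rotated])
  thus "ereal (sc (n+1)) \<le> tgamma n L sc \<gamma> l" using tg_max[OF ne] by simp
qed

lemma eratio_ge:
  assumes L: "\<forall>i\<in>{1..n+1}. 0 \<le> L i" and l: "0 \<le> l" and st: "sc (n+1) \<le> t" and a: "0 < \<alpha>"
  shows "ereal (1/\<alpha>) \<le> eratio n L sc (ereal t) l \<longleftrightarrow> Fcal n L sc t l \<le> \<alpha>"
proof -
  define den where "den = (\<Sum>i=1..n. L i * (if sc i \<le> t then 1 else 0)) + l"
  have F: "Fcal n L sc t l = den / (real n + 1)" unfolding Fcal_def den_def using st by simp
  have d0: "den \<ge> 0" unfolding den_def using L l by (auto intro!: sum_nonneg add_nonneg_nonneg)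
  have E: "eratio n L sc (ereal t) l = (if den = 0 then \<infinity> else ereal ((real n + 1) / den))"
    unfolding eratio_def Let_def den_def using st by simp
  show ?thesis
  proof (cases "den = 0")
    case True thus ?thesis using E F a by simp
  next
    case False
    hence dp: "den > 0" using d0 by simp
    have "1/\<alpha> \<le> (real n + 1)/den \<longleftrightarrow> den \<le> \<alpha> * (real n + 1)"
      using dp a by (simp add: field_simps)
    also have "\<dots> \<longleftrightarrow> den / (real n + 1) \<le> \<alpha>" by (simp add: field_simps)
    finally show ?thesis using E F False by simp
  qed
qed

lemma tg_ninf: "tgamma n L sc \<gamma> l \<noteq> \<infinity>"
  unfolding tgamma_def Let_def by simp

lemma eratio_zero:
  assumes "\<not> ereal (sc (n+1)) \<le> t"
  shows "eratio n L sc t l = 0"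
  using assms unfolding eratio_def Let_def by simp

lemma Egamma_char:
  assumes L: "\<forall>i\<in>{1..n+1}. 0 \<le> L i" and a: "0 < \<alpha>"
  shows "ereal (1/\<alpha>) \<le> Egamma n L sc \<gamma> \<longleftrightarrow>
    (\<forall>l\<in>{0..1}. ereal (sc (n+1)) \<le> tgamma n L sc \<gamma> l \<and>
        Fcal n L sc (real_of_ereal (tgamma n L sc \<gamma> l)) l \<le> \<alpha>)"
proof
  assume h: "ereal (1/\<alpha>) \<le> Egamma n L sc \<gamma>"
  have pos: "ereal (1/\<alpha>) > 0" using a by simp
  have ninf: "(INF l\<in>{0..1}. tgamma n L sc \<gamma> l) \<noteq> -\<infinity>"
    using h pos unfolding Egamma_def by (auto split: if_splits)
  hence EE: "Egamma n L sc \<gamma> = (INF l\<in>{0..1}. eratio n L sc (tgamma n L sc \<gamma> l) l)"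
    unfolding Egamma_def by simp
  show "\<forall>l\<in>{0..1}. ereal (sc (n+1)) \<le> tgamma n L sc \<gamma> l \<and>
        Fcal n L sc (real_of_ereal (tgamma n L sc \<gamma> l)) l \<le> \<alpha>"
  proof
    fix l :: real assume l: "l \<in> {0..1}"
    have ge: "ereal (1/\<alpha>) \<le> eratio n L sc (tgamma n L sc \<gamma> l) l"
    proof -
      have "(INF l\<in>{0..1}. eratio n L sc (tgamma n L sc \<gamma> l) l) \<le> eratio n L sc (tgamma n L sc \<gamma> l) l"
        using l by (rule INF_lower)
      thus ?thesis using h EE by simp
    qed
    have s: "ereal (sc (n+1)) \<le> tgamma n L sc \<gamma> l"
    proof (rule ccontr)
      assume "\<not> ?thesis"
      hence "eratio n L sc (tgamma n L sc \<gamma> l) l = 0" by (rule eratio_zero)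
      thus False using ge pos by simp
    qed
    then obtain t where t: "tgamma n L sc \<gamma> l = ereal t"
      using tg_ninf[of n L sc \<gamma> l] by (cases "tgamma n L sc \<gamma> l") auto
    have st: "sc (n+1) \<le> t" using s t by simp
    have l0: "0 \<le> l" using l by simp
    have "Fcal n L sc t l \<le> \<alpha>" using ge t eratio_ge[where n=n and L=L and sc=sc and l=l and t=t and \<alpha>=\<alpha>, OF L l0 st a] by simp
    thus "ereal (sc (n+1)) \<le> tgamma n L sc \<gamma> l \<and>
        Fcal n L sc (real_of_ereal (tgamma n L sc \<gamma> l)) l \<le> \<alpha>" using s t by simp
  qed
next
  assume h: "\<forall>l\<in>{0..1}. ereal (sc (n+1)) \<le> tgamma n L sc \<gamma> l \<and>
        Fcal n L sc (real_of_ereal (tgamma n L sc \<gamma> l)) l \<le> \<alpha>"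
  have "ereal (sc (n+1)) \<le> (INF l\<in>{0..1}. tgamma n L sc \<gamma> l)"
    by (rule INF_greatest) (use h in blast)
  hence ninf: "(INF l\<in>{0..1}. tgamma n L sc \<gamma> l) \<noteq> -\<infinity>" by auto
  hence EE: "Egamma n L sc \<gamma> = (INF l\<in>{0..1}. eratio n L sc (tgamma n L sc \<gamma> l) l)"
    unfolding Egamma_def by simp
  show "ereal (1/\<alpha>) \<le> Egamma n L sc \<gamma>"
    unfolding EE
  proof (rule INF_greatest)
    fix l :: real assume l: "l \<in> {0..1}"
    have s: "ereal (sc (n+1)) \<le> tgamma n L sc \<gamma> l" using h l by auto
    then obtain t where t: "tgamma n L sc \<gamma> l = ereal t"
      using tg_ninf[of n L sc \<gamma> l] by (cases "tgamma n L sc \<gamma> l") auto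
    have st: "sc (n+1) \<le> t" using s t by simp
    have l0: "0 \<le> l" using l by simp
    have fa: "Fcal n L sc (real_of_ereal (tgamma n L sc \<gamma> l)) l \<le> \<alpha>" using h l by blast
    show "ereal (1/\<alpha>) \<le> eratio n L sc (tgamma n L sc \<gamma> l) l"
      using fa t eratio_ge[where n=n and L=L and sc=sc and l=l and t=t and \<alpha>=\<alpha>, OF L l0 st a] by simp
  qed
qed

lemma tg_exists:
  assumes L: "\<forall>i\<in>{1..n+1}. 0 \<le> L i" and l: "0 \<le> l" and h: "Fcal n L sc (sc (n+1)) l \<le> \<gamma>"
  shows "\<exists>t. tgamma n L sc \<gamma> l = ereal t \<and> t \<in> scoreset n sc \<and> sc (n+1) \<le> t \<and> Fcal n L sc t l \<le> \<gamma>
     \<and> (\<forall>t'\<in>scoreset n sc. Fcal n L sc t' l \<le> \<gamma> \<longrightarrow> t' \<le> t)"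
proof -
  let ?A = "{t \<in> scoreset n sc. Fcal n L sc t l \<le> \<gamma>}"
  have i: "sc (n+1) \<in> ?A" using h s0_in by auto
  hence ne: "?A \<noteq> {}" by auto
  have "sc (n+1) \<le> Max ?A" using i fin_A by (rule Max_ge[rotated])
  moreover have "Max ?A \<in> ?A" using ne fin_A by (rule Max_in[rotated])
  moreover have "\<forall>t'\<in>?A. t' \<le> Max ?A" using fin_A by auto
  ultimately show ?thesis using tg_max[OF ne] by blast
qed

lemma Fcal_ge: "sc (n+1) \<le> t \<Longrightarrow> Fcal n L sc t l = (l + (\<Sum>i=1..n. L i * (if sc i \<le> t then 1 else 0))) / (real n + 1)"
  unfolding Fcal_def by (simp add: add.commute)

lemma Fcal_lt: "\<not> sc (n+1) \<le> t \<Longrightarrow> Fcal n L sc t l = (\<Sum>i=1..n. L i * (if sc i \<le> t then 1 else 0)) / (real n + 1)"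
  unfolding Fcal_def by simp

theorem proposition4p1:
  fixes n :: nat and X :: "nat \<Rightarrow> 'x" and L :: "nat \<Rightarrow> real" and s :: "'x \<Rightarrow> real"
    and \<alpha> \<gamma> :: real
  assumes L_range: "\<forall>i\<in>{1..n+1}. 0 \<le> L i \<and> L i \<le> 1"
    and s_range: "\<forall>x. 0 \<le> s x \<and> s x \<le> 1"
    and alpha: "0 < \<alpha>" "\<alpha> < 1"
    and gamma: "0 < \<gamma>" "\<gamma> < 1"
  shows "(\<gamma> \<le> \<alpha> \<longrightarrow>
           (ereal (1/\<alpha>) \<le> Egamma n L (\<lambda>i. s (X i)) \<gamma> \<longleftrightarrow>
            (1 + (\<Sum>i=1..n. L i * (if s (X i) \<le> s (X (n+1)) then 1 else 0))) / (real n + 1) \<le> \<gamma>))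
       \<and> (\<alpha> < \<gamma> \<longrightarrow>
           (ereal (1/\<alpha>) \<le> Egamma n L (\<lambda>i. s (X i)) \<gamma> \<longleftrightarrow>
            ((1 + (\<Sum>i=1..n. L i * (if s (X i) \<le> s (X (n+1)) then 1 else 0))) / (real n + 1) \<le> \<gamma>
             \<and> (\<forall>t\<in>scoreset n (\<lambda>i. s (X i)). \<forall>l\<in>{0..1::real}.
                  \<not> (\<alpha> < (l + (\<Sum>i=1..n. L i * (if s (X i) \<le> t then 1 else 0))) / (real n + 1)
                       \<and> (l + (\<Sum>i=1..n. L i * (if s (X i) \<le> t then 1 else 0))) / (real n + 1) \<le> \<gamma>)))))"
proof -
  define sc where "sc = (\<lambda>i. s (X i))"
  define S where "S = (\<lambda>t. (\<Sum>i=1..n. L i * (if sc i \<le> t then 1 else 0)))"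
  define s0 where "s0 = sc (n+1)"
  have L: "\<forall>i\<in>{1..n+1}. 0 \<le> L i" using L_range by auto
  have np: "real n + 1 > 0" by simp
  have FS: "\<And>t l. s0 \<le> t \<Longrightarrow> Fcal n L sc t l = (l + S t) / (real n + 1)"
    unfolding S_def s0_def by (rule Fcal_ge)
  have FL: "\<And>t l. \<not> s0 \<le> t \<Longrightarrow> Fcal n L sc t l = S t / (real n + 1)"
    unfolding S_def s0_def by (rule Fcal_lt)
  define C1 where "C1 = ((1 + S s0) / (real n + 1) \<le> \<gamma>)"
  have C1eq: "(\<forall>l\<in>{0..1::real}. Fcal n L sc s0 l \<le> \<gamma>) \<longleftrightarrow> C1"
  proof
    assume "\<forall>l\<in>{0..1::real}. Fcal n L sc s0 l \<le> \<gamma>"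
    then have "Fcal n L sc s0 1 \<le> \<gamma>" by simp
    then show C1 using FS[of s0 1] unfolding C1_def by simp
  next
    assume C1
    show "\<forall>l\<in>{0..1::real}. Fcal n L sc s0 l \<le> \<gamma>"
    proof
      fix l :: real assume l: "l \<in> {0..1}"
      have "(l + S s0) / (real n + 1) \<le> (1 + S s0) / (real n + 1)"
        using l np by (intro divide_right_mono) auto
      thus "Fcal n L sc s0 l \<le> \<gamma>" using FS[of s0 l] \<open>C1\<close> unfolding C1_def by simp
    qed
  qed
  have char: "ereal (1/\<alpha>) \<le> Egamma n L sc \<gamma> \<longleftrightarrow>
    C1 \<and> (\<forall>l\<in>{0..1}. Fcal n L sc (real_of_ereal (tgamma n L sc \<gamma> l)) l \<le> \<alpha>)"
    unfolding Egamma_char[OF L alpha(1)] C1eq[symmetric] using s0le[OF L, of _ sc \<gamma>]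
    unfolding s0_def by auto
  have TG: "\<And>l. C1 \<Longrightarrow> l \<in> {0..1} \<Longrightarrow> \<exists>t. tgamma n L sc \<gamma> l = ereal t \<and> t \<in> scoreset n sc \<and> s0 \<le> t \<and> Fcal n L sc t l \<le> \<gamma>
     \<and> (\<forall>t'\<in>scoreset n sc. Fcal n L sc t' l \<le> \<gamma> \<longrightarrow> t' \<le> t)"
    using tg_exists[OF L] C1eq unfolding s0_def by auto
  have part1: "\<gamma> \<le> \<alpha> \<longrightarrow> (ereal (1/\<alpha>) \<le> Egamma n L sc \<gamma> \<longleftrightarrow> C1)"
  proof
    assume ga: "\<gamma> \<le> \<alpha>"
    show "ereal (1/\<alpha>) \<le> Egamma n L sc \<gamma> \<longleftrightarrow> C1"
      unfolding char
    proof (intro iffI conjI ballI)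
      fix l :: real assume c: C1 and l: "l \<in> {0..1}"
      obtain t where "tgamma n L sc \<gamma> l = ereal t" "Fcal n L sc t l \<le> \<gamma>" using TG[OF c l] by blast
      thus "Fcal n L sc (real_of_ereal (tgamma n L sc \<gamma> l)) l \<le> \<alpha>" using ga by simp
    qed auto
  qed
  define Q where "Q = (\<forall>t\<in>scoreset n sc. \<forall>l\<in>{0..1::real}.
                  \<not> (\<alpha> < (l + S t) / (real n + 1) \<and> (l + S t) / (real n + 1) \<le> \<gamma>))"
  have part2: "\<alpha> < \<gamma> \<longrightarrow> (ereal (1/\<alpha>) \<le> Egamma n L sc \<gamma> \<longleftrightarrow> C1 \<and> Q)"
  proof
    assume ag: "\<alpha> < \<gamma>"
    show "ereal (1/\<alpha>) \<le> Egamma n L sc \<gamma> \<longleftrightarrow> C1 \<and> Q"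
      unfolding char
    proof (intro iffI conjI ballI)
      assume h: "C1 \<and> (\<forall>l\<in>{0..1}. Fcal n L sc (real_of_ereal (tgamma n L sc \<gamma> l)) l \<le> \<alpha>)"
      show C1 using h by simp
      show Q unfolding Q_def
      proof (intro ballI notI)
        fix t l assume t: "t \<in> scoreset n sc" and l: "l \<in> {0..1::real}"
          and b: "\<alpha> < (l + S t) / (real n + 1) \<and> (l + S t) / (real n + 1) \<le> \<gamma>"
        obtain tm where tm: "tgamma n L sc \<gamma> l = ereal tm" "tm \<in> scoreset n sc" "s0 \<le> tm"
          "\<forall>t'\<in>scoreset n sc. Fcal n L sc t' l \<le> \<gamma> \<longrightarrow> t' \<le> tm"
          using TG[of l] h l by blast
        have "Fcal n L sc (real_of_ereal (tgamma n L sc \<gamma> l)) l \<le> \<alpha>" using h l by blast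
        hence fa: "Fcal n L sc tm l \<le> \<alpha>" using tm(1) by simp
        show False
        proof (cases "s0 \<le> t")
          case True
          hence "Fcal n L sc t l \<le> \<gamma>" using FS b by simp
          hence "t \<le> tm" using tm(4) t by blast
          hence "Fcal n L sc t l \<le> Fcal n L sc tm l" using Fcal_mono[OF L] l by auto
          thus False using FS[OF True] b fa by simp
        next
          case False
          hence "t \<le> s0" by simp
          hence "Fcal n L sc t 0 \<le> Fcal n L sc s0 0" using Fcal_mono[OF L] by auto
          hence "S t \<le> S s0" using FS[of s0 0] FL[OF False, of 0] np by (simp add: divide_le_cancel)
          hence "(l + S t) / (real n + 1) \<le> Fcal n L sc s0 l"
            using FS[of s0 l] np by (simp add: divide_right_mono)
          also have "\<dots> \<le> Fcal n L sc tm l" using Fcal_mono[OF L] l tm(3) by auto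
          finally show False using fa b by simp
        qed
      qed
    next
      fix l :: real assume h: "C1 \<and> Q" and l: "l \<in> {0..1}"
      obtain tm where tm: "tgamma n L sc \<gamma> l = ereal tm" "tm \<in> scoreset n sc" "s0 \<le> tm"
          "Fcal n L sc tm l \<le> \<gamma>"
          using TG[of l] h l by blast
      have "\<not> (\<alpha> < (l + S tm) / (real n + 1) \<and> (l + S tm) / (real n + 1) \<le> \<gamma>)"
        using h tm(2) l unfolding Q_def by blast
      thus "Fcal n L sc (real_of_ereal (tgamma n L sc \<gamma> l)) l \<le> \<alpha>"
        using tm FS[OF tm(3)] by auto
    qed simp
  qed
  show ?thesis using part1 part2 unfolding C1_def Q_def S_def s0_def sc_def by simp
qed

end
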